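(* Let $P=(Q,I,M,\Delta)$ be a broadcast protocol and consider a run of the saturation algorithm on $P$, with $S_0=I,S_1,\dots,S_m$ the values of the set $S$ after each iteration and $c_0=|I|,c_1,\dots,c_m$ the corresponding values of the counter $c$. For every $0\le i\le m$, there exist an initial configuration $\gamma_0$, a configuration $\gamma=(V,E,L)$ and a reconfigurable execution $\rho$ from $\gamma_0$ to $\gamma$ such that $L(\gamma)=S_i$, $\rho$ has exactly $c_i$ nodes, and every node has active length at most $i$ along $\rho$.
   Context: A broadcast protocol is a tuple $P=(Q,I,M,\Delta)$ where $Q$ is a finite set of states, $I\subseteq Q$ initial states, $M$ a finite message alphabet and $\Delta\subseteq Q\times\{!!m,\ ??m \mid m\in M\}\times Q$ ($!!m$ = broadcast, $??m$ = reception). Protocols are complete for receptions: for every $q$, $m$ there is $q'$ with $(q,??m,q')\in\Delta$. A configuration is a finite undirected graph $\gamma=(V,E,L)$, $E$ symmetric irreflexive, $L:V\to Q$; $L(\gamma)=L(V)$; $\gamma$ is initial if $L(V)\subseteq I$. A reconfigurable step goes from $\gamma=(V,E,L)$ to $\gamma'=(V,E',L')$ ($E'$ arbitrary) if there exist a node $v$ and $m\in M$ with $(L(v),!!m,L'(v))\in\Delta$ and for every $v'\neq v$: if $v'$ is a neighbour of $v$ in $E$ then $(L(v'),??m,L'(v'))\in\Delta$, otherwise $L'(v')=L(v')$; $v$ broadcasts in this step. A reconfigurable execution is a sequence of configurations over a fixed node set starting from an initial one with consecutive reconfigurable steps; its number of nodes is $|V|$; the active length of a node $v$ is the number of steps in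 which $v$ broadcasts. The saturation algorithm: start with $S:=I$, $c:=|I|$; repeat: if there is $(q_1,!!m,q_2)\in\Delta$ with $q_1\in S$, $q_2\notin S$, add $q_2$ to $S$ and $c:=c+1$; else if there are $(q_1,!!m,q_2),(q_1',??m,q_2')\in\Delta$ with $q_1,q_2,q_1'\in S$, $q_2'\notin S$, add $q_2'$ and $c:=c+2$; else stop and return $S$. Each iteration adds exactly one state. *)

theory Defs
  imports Main
begin

datatype 'm action = Bcast 'm | Recv 'm

fun msg_of :: "'m action \<Rightarrow> 'm" where
  "msg_of (Bcast m) = m" | "msg_of (Recv m) = m"

definition broadcast_protocol ::
  "'q set \<Rightarrow> 'q set \<Rightarrow> 'm set \<Rightarrow> ('q \<times> 'm action \<times> 'q) set \<Rightarrow> bool" where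
  "broadcast_protocol Q I M \<Delta> \<longleftrightarrow>
     finite Q \<and> finite M \<and> I \<subseteq> Q \<and>
     (\<forall>(q, a, q') \<in> \<Delta>. q \<in> Q \<and> q' \<in> Q \<and> msg_of a \<in> M) \<and>
     (\<forall>q \<in> Q. \<forall>m \<in> M. \<exists>q'. (q, Recv m, q') \<in> \<Delta>)"

type_synonym 'q config = "nat set \<times> (nat \<times> nat) set \<times> (nat \<Rightarrow> 'q)"

definition is_config :: "'q set \<Rightarrow> 'q config \<Rightarrow> bool" where
  "is_config Q \<gamma> = (case \<gamma> of (V, E, L) \<Rightarrow>
     finite V \<and> E \<subseteq> V \<times> V \<and> sym E \<and> irrefl E \<and> L ` V \<subseteq> Q)"

definition nodes :: "'q config \<Rightarrow> nat set" where
  "nodes \<gamma> = fst \<gamma>"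

definition labels :: "'q config \<Rightarrow> 'q set" where
  "labels \<gamma> = (case \<gamma> of (V, E, L) \<Rightarrow> L ` V)"

definition initial_config :: "'q set \<Rightarrow> 'q set \<Rightarrow> 'q config \<Rightarrow> bool" where
  "initial_config Q I \<gamma> \<longleftrightarrow> is_config Q \<gamma> \<and> labels \<gamma> \<subseteq> I"

definition rstep ::
  "'q set \<Rightarrow> ('q \<times> 'm action \<times> 'q) set \<Rightarrow> 'q config \<Rightarrow> nat \<Rightarrow> 'm \<Rightarrow> 'q config \<Rightarrow> bool" where
  "rstep Q \<Delta> \<gamma> v m \<gamma>' = (case \<gamma> of (V, E, L) \<Rightarrow> case \<gamma>' of (V', E', L') \<Rightarrow>
     is_config Q \<gamma> \<and> is_config Q \<gamma>' \<and> V' = V \<and> v \<in> V \<and>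
     (L v, Bcast m, L' v) \<in> \<Delta> \<and>
     (\<forall>v' \<in> V. v' \<noteq> v \<longrightarrow>
        (if (v, v') \<in> E then (L v', Recv m, L' v') \<in> \<Delta> else L' v' = L v')))"

text \<open>A reconfigurable execution: a list of configurations gs together with the list bs
  of the nodes broadcasting in each step (length gs = length bs + 1).\<close>
definition rexec ::
  "'q set \<Rightarrow> 'q set \<Rightarrow> ('q \<times> 'm action \<times> 'q) set \<Rightarrow> 'q config list \<Rightarrow> nat list \<Rightarrow> bool" where
  "rexec Q I \<Delta> gs bs \<longleftrightarrow>
     length gs = Suc (length bs) \<and> initial_config Q I (gs ! 0) \<and>
     (\<forall>k < length bs. \<exists>m. rstep Q \<Delta> (gs ! k) (bs ! k) m (gs ! Suc k))"

definition active_length :: "nat list \<Rightarrow> nat \<Rightarrow> nat" where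
  "active_length bs v = length (filter (\<lambda>u. u = v) bs)"

definition rule1 :: "('q \<times> 'm action \<times> 'q) set \<Rightarrow> 'q set \<Rightarrow> 'q \<Rightarrow> bool" where
  "rule1 \<Delta> S q2 \<longleftrightarrow> (\<exists>q1 m. (q1, Bcast m, q2) \<in> \<Delta> \<and> q1 \<in> S \<and> q2 \<notin> S)"

definition rule2 :: "('q \<times> 'm action \<times> 'q) set \<Rightarrow> 'q set \<Rightarrow> 'q \<Rightarrow> bool" where
  "rule2 \<Delta> S q2' \<longleftrightarrow> (\<exists>q1 q2 q1' m. (q1, Bcast m, q2) \<in> \<Delta> \<and> (q1', Recv m, q2') \<in> \<Delta> \<and>
      q1 \<in> S \<and> q2 \<in> S \<and> q1' \<in> S \<and> q2' \<notin> S)"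

definition sat_step ::
  "('q \<times> 'm action \<times> 'q) set \<Rightarrow> 'q set \<Rightarrow> nat \<Rightarrow> 'q set \<Rightarrow> nat \<Rightarrow> bool" where
  "sat_step \<Delta> S c S' c' \<longleftrightarrow>
     (\<exists>q. rule1 \<Delta> S q \<and> S' = insert q S \<and> c' = c + 1) \<or>
     ((\<nexists>q. rule1 \<Delta> S q) \<and> (\<exists>q. rule2 \<Delta> S q \<and> S' = insert q S \<and> c' = c + 2))"

definition sat_stops :: "('q \<times> 'm action \<times> 'q) set \<Rightarrow> 'q set \<Rightarrow> bool" where
  "sat_stops \<Delta> S \<longleftrightarrow> (\<nexists>q. rule1 \<Delta> S q) \<and> (\<nexists>q. rule2 \<Delta> S q)"

definition sat_run ::
  "'q set \<Rightarrow> ('q \<times> 'm action \<times> 'q) set \<Rightarrow> (nat \<Rightarrow> 'q set) \<Rightarrow> (nat \<Rightarrow> nat) \<Rightarrow> nat \<Rightarrow> bool" where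
  "sat_run I \<Delta> S c m \<longleftrightarrow>
     S 0 = I \<and> c 0 = card I \<and>
     (\<forall>i < m. sat_step \<Delta> (S i) (c i) (S (Suc i)) (c (Suc i))) \<and>
     sat_stops \<Delta> (S m)"

end

theory Submission
  imports Defs
begin

lemma active_snoc: "active_length (bs @ [b]) u = active_length bs u + (if b = u then 1 else 0)"
  by (simp add: active_length_def)

lemma rexec_snoc:
  assumes "rexec Q I \<Delta> gs bs" "rstep Q \<Delta> (last gs) b m \<gamma>"
  shows "rexec Q I \<Delta> (gs @ [\<gamma>]) (bs @ [b])"
proof -
  have len: "length gs = Suc (length bs)" and ini: "initial_config Q I (gs ! 0)"
    and st: "\<forall>k < length bs. \<exists>m. rstep Q \<Delta> (gs ! k) (bs ! k) m (gs ! Suc k)"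
    using assms(1) unfolding rexec_def by auto
  have ne: "gs \<noteq> []" using len by auto
  have lst: "last gs = gs ! length bs" using len ne by (simp add: last_conv_nth)
  show ?thesis unfolding rexec_def
  proof (intro conjI allI impI)
    show "length (gs @ [\<gamma>]) = Suc (length (bs @ [b]))" using len by simp
    show "initial_config Q I ((gs @ [\<gamma>]) ! 0)" using ini ne by (simp add: nth_append)
    fix k assume k: "k < length (bs @ [b])"
    show "\<exists>m. rstep Q \<Delta> ((gs @ [\<gamma>]) ! k) ((bs @ [b]) ! k) m ((gs @ [\<gamma>]) ! Suc k)"
    proof (cases "k < length bs")
      case True
      then show ?thesis using st len by (simp add: nth_append)
    next
      case False
      then have "k = length bs" using k by simp
      then show ?thesis using assms(2) len lst by (auto simp: nth_append)
    qed
  qed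
qed

lemma rexec_unsnoc:
  assumes "rexec Q I \<Delta> gs (bs @ [b])"
  shows "\<exists>gs0 \<gamma> m. gs = gs0 @ [\<gamma>] \<and> rexec Q I \<Delta> gs0 bs \<and> rstep Q \<Delta> (last gs0) b m \<gamma>"
proof -
  have len: "length gs = Suc (Suc (length bs))" and ini: "initial_config Q I (gs ! 0)"
    and st: "\<forall>k < Suc (length bs). \<exists>m. rstep Q \<Delta> (gs ! k) ((bs@[b]) ! k) m (gs ! Suc k)"
    using assms(1) unfolding rexec_def by auto
  define gs0 where "gs0 = butlast gs"
  define \<gamma> where "\<gamma> = last gs"
  have ne: "gs \<noteq> []" using len by auto
  have gs: "gs = gs0 @ [\<gamma>]" using ne by (simp add: gs0_def \<gamma>_def)
  have len0: "length gs0 = Suc (length bs)" using len by (simp add: gs0_def)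
  have "rexec Q I \<Delta> gs0 bs" unfolding rexec_def
  proof (intro conjI allI impI)
    show "length gs0 = Suc (length bs)" by (rule len0)
    show "initial_config Q I (gs0 ! 0)" using ini gs len0 by (metis nth_append zero_less_Suc)
    fix k assume k: "k < length bs"
    have "\<exists>m. rstep Q \<Delta> (gs ! k) ((bs@[b]) ! k) m (gs ! Suc k)" using st k by simp
    then show "\<exists>m. rstep Q \<Delta> (gs0 ! k) (bs ! k) m (gs0 ! Suc k)"
      using k len0 gs by (simp add: nth_append)
  qed
  moreover have "\<exists>m. rstep Q \<Delta> (last gs0) b m \<gamma>"
  proof -
    have "\<exists>m. rstep Q \<Delta> (gs ! length bs) ((bs@[b]) ! length bs) m (gs ! Suc (length bs))"
      using st by blast
    then have "\<exists>m. rstep Q \<Delta> (gs ! length bs) b m (gs ! Suc (length bs))" by simp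
    moreover have "gs ! length bs = last gs0" using len0 gs
      by (metis diff_Suc_1 last_conv_nth lessI list.size(3) nat.distinct(1) nth_append)
    moreover have "gs ! Suc (length bs) = \<gamma>" using len0 gs by (metis nth_append_length)
    ultimately show ?thesis by simp
  qed
  ultimately show ?thesis using gs by blast
qed

lemma rexec_ne: "rexec Q I \<Delta> gs bs \<Longrightarrow> gs \<noteq> []"
  by (auto simp: rexec_def)

lemma rexec_last:
  "rexec Q I \<Delta> gs bs \<Longrightarrow> fst (last gs) = fst (gs ! 0) \<and> is_config Q (last gs)"
proof (induction bs arbitrary: gs rule: rev_induct)
  case Nil
  then have "length gs = 1" by (simp add: rexec_def)
  then have "last gs = gs ! 0" by (metis One_nat_def diff_Suc_1 last_conv_nth list.size(3) zero_neq_one)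
  then show ?case using Nil by (simp add: rexec_def initial_config_def)
next
  case (snoc b bs)
  obtain gs0 \<gamma> m where gs: "gs = gs0 @ [\<gamma>]" and r: "rexec Q I \<Delta> gs0 bs"
    and s: "rstep Q \<Delta> (last gs0) b m \<gamma>" using rexec_unsnoc[OF snoc.prems] by blast
  have ne: "gs0 \<noteq> []" using rexec_ne[OF r] .
  have IH: "fst (last gs0) = fst (gs0 ! 0)" using snoc.IH[OF r] by simp
  have "fst \<gamma> = fst (last gs0) \<and> is_config Q \<gamma>" using s
    by (cases "last gs0"; cases \<gamma>) (simp add: rstep_def)
  then show ?case using IH gs ne by (simp add: nth_append)
qed



lemma dup:
  "rexec Q I \<Delta> gs bs \<Longrightarrow> last gs = (V, E, L) \<Longrightarrow> v \<in> V \<Longrightarrow> w \<notin> V \<Longrightarrow>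
   is_config Q (insert w V, E2, L(w := L v)) \<Longrightarrow>
   \<exists>gs' bs'. rexec Q I \<Delta> gs' bs' \<and> last gs' = (insert w V, E2, L(w := L v)) \<and>
     fst (gs' ! 0) = insert w (fst (gs ! 0)) \<and>
     (\<forall>u \<in> fst (gs ! 0). active_length bs' u = active_length bs u) \<and>
     active_length bs' w = active_length bs v"
proof (induction bs arbitrary: gs V E L E2 rule: rev_induct)
  case Nil
  then have "length gs = 1" by (simp add: rexec_def)
  then have lst: "last gs = gs ! 0" by (metis One_nat_def diff_Suc_1 last_conv_nth list.size(3) zero_neq_one)
  have ini: "initial_config Q I (V, E, L)" using Nil lst by (simp add: rexec_def)
  have "(L(w := L v)) ` insert w V = L ` V" using Nil.prems(3,4) by auto
  then have "initial_config Q I (insert w V, E2, L(w := L v))"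
  proof -
    have "labels (insert w V, E2, L(w := L v)) = L ` V" unfolding labels_def prod.case by (rule \<open>(L(w := L v)) ` insert w V = L ` V\<close>)
    then show ?thesis using ini Nil.prems(5) unfolding initial_config_def by (simp only: labels_def prod.case)
  qed
  then have "rexec Q I \<Delta> [(insert w V, E2, L(w := L v))] []" by (simp add: rexec_def)
  then show ?case using Nil lst
    by (intro exI[of _ "[(insert w V, E2, L(w := L v))]"] exI[of _ "[]"]) (auto simp: active_length_def)
next
  case (snoc b bs)
  obtain gs0 \<gamma> m where gs: "gs = gs0 @ [\<gamma>]" and r: "rexec Q I \<Delta> gs0 bs"
    and s: "rstep Q \<Delta> (last gs0) b m \<gamma>" using rexec_unsnoc[OF snoc.prems(1)] by blast
  have ne: "gs0 \<noteq> []" using rexec_ne[OF r] .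
  have g: "\<gamma> = (V, E, L)" using gs snoc.prems(2) by simp
  obtain V0 E0 L0 where l0: "last gs0 = (V0, E0, L0)" by (cases "last gs0") auto
  have V0: "V0 = V" and bV: "b \<in> V" and cf0: "is_config Q (V, E0, L0)" and cf: "is_config Q (V, E, L)"
    and bc: "(L0 b, Bcast m, L b) \<in> \<Delta>"
    and oth: "\<forall>v' \<in> V. v' \<noteq> b \<longrightarrow> (if (b, v') \<in> E0 then (L0 v', Recv m, L v') \<in> \<Delta> else L v' = L0 v')"
  proof -
    have "is_config Q (V0, E0, L0) \<and> is_config Q (V, E, L) \<and> V = V0 \<and> b \<in> V0 \<and> (L0 b, Bcast m, L b) \<in> \<Delta> \<and>
      (\<forall>v' \<in> V0. v' \<noteq> b \<longrightarrow> (if (b, v') \<in> E0 then (L0 v', Recv m, L v') \<in> \<Delta> else L v' = L0 v'))"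
      using s unfolding g l0 rstep_def prod.case by blast
    then show "V0 = V" "b \<in> V" "is_config Q (V, E0, L0)" "is_config Q (V, E, L)" "(L0 b, Bcast m, L b) \<in> \<Delta>"
      "\<forall>v' \<in> V. v' \<noteq> b \<longrightarrow> (if (b, v') \<in> E0 then (L0 v', Recv m, L v') \<in> \<Delta> else L v' = L0 v')"
      by auto
  qed
  have first: "fst (gs ! 0) = fst (gs0 ! 0)" using gs ne by (simp add: nth_append)
  have first2: "fst (gs0 ! 0) = V" using rexec_last[OF r] l0 V0 by simp
  have wV: "w \<notin> V" "v \<in> V" using snoc.prems by auto
  have bw: "b \<noteq> w" using bV wV by auto
  have cf0': "finite V" "E0 \<subseteq> V \<times> V" "sym E0" "irrefl E0" "L0 ` V \<subseteq> Q"
    using cf0 by (auto simp: is_config_def)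
  have cf': "L ` V \<subseteq> Q" using cf by (auto simp: is_config_def)
  show ?case
  proof (cases "b = v")
    case False
    define E3 where "E3 = (if (b, v) \<in> E0 then E0 \<union> {(b, w), (w, b)} else E0)"
    have c3: "is_config Q (insert w V, E3, L0(w := L0 v))"
      using cf0' bV wV bw unfolding is_config_def E3_def
      by (auto simp: sym_def irrefl_def)
    obtain gs' bs' where r': "rexec Q I \<Delta> gs' bs'" and l': "last gs' = (insert w V, E3, L0(w := L0 v))"
      and f': "fst (gs' ! 0) = insert w (fst (gs0 ! 0))"
      and a1: "\<forall>u \<in> fst (gs0 ! 0). active_length bs' u = active_length bs u"
      and a2: "active_length bs' w = active_length bs v"
      using snoc.IH[OF r l0[unfolded V0] wV(2) wV(1) c3] by blast
    have st: "rstep Q \<Delta> (last gs') b m (insert w V, E2, L(w := L v))"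
      unfolding l' rstep_def
    proof (simp only: prod.case, intro conjI)
      show "is_config Q (insert w V, E3, L0(w := L0 v))" by (rule c3)
      show "is_config Q (insert w V, E2, L(w := L v))" by (rule snoc.prems(5))
      show "insert w V = insert w V" by simp
      show "b \<in> insert w V" using bV by simp
      show "((L0(w := L0 v)) b, Bcast m, (L(w := L v)) b) \<in> \<Delta>" using bc bw by simp
      show "\<forall>v'\<in>insert w V. v' \<noteq> b \<longrightarrow>
        (if (b, v') \<in> E3 then ((L0(w := L0 v)) v', Recv m, (L(w := L v)) v') \<in> \<Delta>
         else (L(w := L v)) v' = (L0(w := L0 v)) v')"
      proof (intro ballI impI)
        fix v' assume v': "v' \<in> insert w V" "v' \<noteq> b"
        show "if (b, v') \<in> E3 then ((L0(w := L0 v)) v', Recv m, (L(w := L v)) v') \<in> \<Delta>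
         else (L(w := L v)) v' = (L0(w := L0 v)) v'"
        proof (cases "v' = w")
          case True
          then show ?thesis using oth wV False cf0'(2) bw unfolding E3_def by auto
        next
          case F: False
          then have "v' \<in> V" using v' by simp
          then show ?thesis using oth v' F cf0'(2) unfolding E3_def by auto
        qed
      qed
    qed
    have ne': "gs' \<noteq> []" using rexec_ne[OF r'] .
    show ?thesis
      apply (rule exI[of _ "gs' @ [(insert w V, E2, L(w := L v))]"], rule exI[of _ "bs' @ [b]"])
      using rexec_snoc[OF r' st] ne' f' first a1 a2 False bw by (simp add: nth_append active_snoc fun_upd_def)
  next
    case True
    have c3: "is_config Q (insert w V, E0, L0(w := L0 v))"
      using cf0' bV wV bw unfolding is_config_def
      by (auto simp: sym_def irrefl_def)
    obtain gs' bs' where r': "rexec Q I \<Delta> gs' bs'" and l': "last gs' = (insert w V, E0, L0(w := L0 v))"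
      and f': "fst (gs' ! 0) = insert w (fst (gs0 ! 0))"
      and a1: "\<forall>u \<in> fst (gs0 ! 0). active_length bs' u = active_length bs u"
      and a2: "active_length bs' w = active_length bs v"
      using snoc.IH[OF r l0[unfolded V0] wV(2) wV(1) c3] by blast
    have c4: "is_config Q (insert w V, {}, L(w := L0 v))"
      using cf0' cf' wV unfolding is_config_def by (auto simp: sym_def irrefl_def)
    have st1: "rstep Q \<Delta> (last gs') v m (insert w V, {}, L(w := L0 v))"
      unfolding l' rstep_def
    proof (simp only: prod.case, intro conjI)
      show "is_config Q (insert w V, E0, L0(w := L0 v))" by (rule c3)
      show "is_config Q (insert w V, {}, L(w := L0 v))" by (rule c4)
      show "insert w V = insert w V" by simp
      show "v \<in> insert w V" using wV by simp
      show "((L0(w := L0 v)) v, Bcast m, (L(w := L0 v)) v) \<in> \<Delta>" using bc bw True by simp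
      show "\<forall>v'\<in>insert w V. v' \<noteq> v \<longrightarrow>
        (if (v, v') \<in> E0 then ((L0(w := L0 v)) v', Recv m, (L(w := L0 v)) v') \<in> \<Delta>
         else (L(w := L0 v)) v' = (L0(w := L0 v)) v')"
      proof (intro ballI impI)
        fix v' assume v': "v' \<in> insert w V" "v' \<noteq> v"
        show "if (v, v') \<in> E0 then ((L0(w := L0 v)) v', Recv m, (L(w := L0 v)) v') \<in> \<Delta>
         else (L(w := L0 v)) v' = (L0(w := L0 v)) v'"
        proof (cases "v' = w")
          case True
          then show ?thesis using wV cf0'(2) by auto
        next
          case F: False
          then have "v' \<in> V" using v' by simp
          then show ?thesis using oth v' F True by auto
        qed
      qed
    qed
    have st2: "rstep Q \<Delta> (last (gs' @ [(insert w V, {}, L(w := L0 v))])) w m (insert w V, E2, L(w := L v))"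
      using c4 snoc.prems(5) bc True wV by (auto simp: rstep_def fun_upd_def)
    have ne': "gs' \<noteq> []" using rexec_ne[OF r'] .
    have R: "rexec Q I \<Delta> ((gs' @ [(insert w V, {}, L(w := L0 v))]) @ [(insert w V, E2, L(w := L v))])
       ((bs' @ [v]) @ [w])"
      by (rule rexec_snoc[OF rexec_snoc[OF r' st1] st2])
    show ?thesis
      apply (rule exI[of _ "(gs' @ [(insert w V, {}, L(w := L0 v))]) @ [(insert w V, E2, L(w := L v))]"],
             rule exI[of _ "(bs' @ [v]) @ [w]"])
      using R ne' f' first a1 a2 True bw wV first2 by (auto simp: nth_append active_length_def fun_upd_def)
  qed
qed


lemma step1:
  assumes bp: "broadcast_protocol Q I M \<Delta>" and r: "rexec Q I \<Delta> gs bs"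
    and lab: "labels (last gs) = S" and act: "\<forall>v\<in>nodes (gs ! 0). active_length bs v \<le> i"
    and ru: "rule1 \<Delta> S q"
  shows "\<exists>gs' bs'. rexec Q I \<Delta> gs' bs' \<and> labels (last gs') = insert q S \<and>
     card (nodes (gs' ! 0)) = Suc (card (nodes (gs ! 0))) \<and>
     (\<forall>v\<in>nodes (gs' ! 0). active_length bs' v \<le> Suc i)"
proof -
  obtain q1 m where t: "(q1, Bcast m, q) \<in> \<Delta>" and q1: "q1 \<in> S" and qS: "q \<notin> S"
    using ru unfolding rule1_def by blast
  have qQ: "q \<in> Q" using bp t unfolding broadcast_protocol_def by blast
  obtain V E L where l: "last gs = (V, E, L)" by (cases "last gs") auto
  have V: "fst (gs ! 0) = V" and cf: "is_config Q (V, E, L)" using rexec_last[OF r] l by auto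
  have fin: "finite V" and LQ: "L ` V \<subseteq> Q" using cf by (auto simp: is_config_def)
  have LV: "L ` V = S" using lab l by (simp add: labels_def)
  obtain v where v: "v \<in> V" "L v = q1" using q1 LV by auto
  obtain w :: nat where w: "w \<notin> V" using ex_new_if_finite[OF infinite_UNIV_nat fin] by blast
  have c: "is_config Q (insert w V, {}, L(w := L v))"
    using fin LQ v unfolding is_config_def by (auto simp: sym_def irrefl_def)
  obtain gs' bs' where r': "rexec Q I \<Delta> gs' bs'" and l': "last gs' = (insert w V, {}, L(w := L v))"
    and f': "fst (gs' ! 0) = insert w (fst (gs ! 0))"
    and a1: "\<forall>u \<in> fst (gs ! 0). active_length bs' u = active_length bs u"
    and a2: "active_length bs' w = active_length bs v"
    using dup[OF r l v(1) w c] by blast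
  have c2: "is_config Q (insert w V, {}, L(w := q))"
    using fin LQ qQ unfolding is_config_def by (auto simp: sym_def irrefl_def)
  have st: "rstep Q \<Delta> (last gs') w m (insert w V, {}, L(w := q))"
    using c c2 t v unfolding l' rstep_def by auto
  have R: "rexec Q I \<Delta> (gs' @ [(insert w V, {}, L(w := q))]) (bs' @ [w])" by (rule rexec_snoc[OF r' st])
  have ne': "gs' \<noteq> []" using rexec_ne[OF r'] .
  have labs: "labels (insert w V, {}, L(w := q)) = insert q S"
    using LV w unfolding labels_def by auto
  have "card (insert w V) = Suc (card V)" using fin w by simp
  show ?thesis
    apply (rule exI[of _ "gs' @ [(insert w V, {}, L(w := q))]"], rule exI[of _ "bs' @ [w]"])
    using R labs ne' f' V a1 a2 act w v \<open>card (insert w V) = Suc (card V)\<close>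
    by (auto simp: nth_append active_snoc nodes_def)
qed

lemma step2:
  assumes bp: "broadcast_protocol Q I M \<Delta>" and r: "rexec Q I \<Delta> gs bs"
    and lab: "labels (last gs) = S" and act: "\<forall>v\<in>nodes (gs ! 0). active_length bs v \<le> i"
    and ru: "rule2 \<Delta> S q"
  shows "\<exists>gs' bs'. rexec Q I \<Delta> gs' bs' \<and> labels (last gs') = insert q S \<and>
     card (nodes (gs' ! 0)) = Suc (Suc (card (nodes (gs ! 0)))) \<and>
     (\<forall>v\<in>nodes (gs' ! 0). active_length bs' v \<le> Suc i)"
proof -
  obtain q1 q2 q1' m where t: "(q1, Bcast m, q2) \<in> \<Delta>" and t': "(q1', Recv m, q) \<in> \<Delta>"
    and q1: "q1 \<in> S" and q2: "q2 \<in> S" and q1': "q1' \<in> S" and qS: "q \<notin> S"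
    using ru unfolding rule2_def by blast
  have qQ: "q \<in> Q" "q2 \<in> Q" using bp t t' unfolding broadcast_protocol_def by blast+
  obtain V E L where l: "last gs = (V, E, L)" by (cases "last gs") auto
  have V: "fst (gs ! 0) = V" and cf: "is_config Q (V, E, L)" using rexec_last[OF r] l by auto
  have fin: "finite V" and LQ: "L ` V \<subseteq> Q" using cf by (auto simp: is_config_def)
  have LV: "L ` V = S" using lab l by (simp add: labels_def)
  obtain v1 where v1: "v1 \<in> V" "L v1 = q1" using q1 LV by auto
  obtain v2 where v2: "v2 \<in> V" "L v2 = q1'" using q1' LV by auto
  obtain w1 :: nat where w1: "w1 \<notin> V" using ex_new_if_finite[OF infinite_UNIV_nat fin] by blast
  have fin1: "finite (insert w1 V)" using fin by simp
  obtain w2 :: nat where w2: "w2 \<notin> insert w1 V" using ex_new_if_finite[OF infinite_UNIV_nat fin1] by blast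
  have c: "is_config Q (insert w1 V, {}, L(w1 := L v1))"
    using fin LQ v1 unfolding is_config_def by (auto simp: sym_def irrefl_def)
  obtain gs1 bs1 where r1: "rexec Q I \<Delta> gs1 bs1" and l1: "last gs1 = (insert w1 V, {}, L(w1 := L v1))"
    and f1: "fst (gs1 ! 0) = insert w1 (fst (gs ! 0))"
    and a11: "\<forall>u \<in> fst (gs ! 0). active_length bs1 u = active_length bs u"
    and a12: "active_length bs1 w1 = active_length bs v1"
    using dup[OF r l v1(1) w1 c] by blast
  define Ew where "Ew = {(w1, w2), (w2, w1)}"
  define L1 where "L1 = L(w1 := L v1)"
  have L1v2: "L1 v2 = q1'" using v2 w1 by (auto simp: L1_def)
  have cc: "is_config Q (insert w2 (insert w1 V), Ew, L1(w2 := L1 v2))"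
    using fin LQ v1 v2 w2 unfolding is_config_def Ew_def L1_def by (auto simp: sym_def irrefl_def)
  obtain gs2 bs2 where r2: "rexec Q I \<Delta> gs2 bs2" and l2: "last gs2 = (insert w2 (insert w1 V), Ew, L1(w2 := L1 v2))"
    and f2: "fst (gs2 ! 0) = insert w2 (fst (gs1 ! 0))"
    and a21: "\<forall>u \<in> fst (gs1 ! 0). active_length bs2 u = active_length bs1 u"
    and a22: "active_length bs2 w2 = active_length bs1 v2"
    using dup[OF r1 l1[folded L1_def] _ w2 cc] v2(1) by blast
  define L3 where "L3 = L(w1 := q2, w2 := q)"
  have c3: "is_config Q (insert w2 (insert w1 V), {}, L3)"
    using fin LQ qQ unfolding is_config_def L3_def by (auto simp: sym_def irrefl_def)
  have w12: "w1 \<noteq> w2" using w2 by auto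
  have st: "rstep Q \<Delta> (last gs2) w1 m (insert w2 (insert w1 V), {}, L3)"
    using cc c3 t t' w12 L1v2 v1 w1 w2 unfolding l2 rstep_def L3_def L1_def Ew_def by auto
  have R: "rexec Q I \<Delta> (gs2 @ [(insert w2 (insert w1 V), {}, L3)]) (bs2 @ [w1])" by (rule rexec_snoc[OF r2 st])
  have ne': "gs2 \<noteq> []" using rexec_ne[OF r2] .
  have labs: "labels (insert w2 (insert w1 V), {}, L3) = insert q S"
    using LV w1 w2 q2 w12 unfolding labels_def L3_def by auto
  have "card (insert w2 (insert w1 V)) = Suc (Suc (card V))" using fin w1 w2 by simp
  show ?thesis
    apply (rule exI[of _ "gs2 @ [(insert w2 (insert w1 V), {}, L3)]"], rule exI[of _ "bs2 @ [w1]"])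
    using R labs ne' f1 f2 V a11 a12 a21 a22 act w1 w2 w12 v1 v2 \<open>card (insert w2 (insert w1 V)) = Suc (Suc (card V))\<close>
    by (auto simp: nth_append active_snoc nodes_def)
qed


theorem lemma3p3:
  fixes Q I :: "'q set" and M :: "'m set" and \<Delta> :: "('q \<times> 'm action \<times> 'q) set"
    and S :: "nat \<Rightarrow> 'q set" and c :: "nat \<Rightarrow> nat" and m :: nat
  assumes "broadcast_protocol Q I M \<Delta>"
    and "sat_run I \<Delta> S c m"
  shows "\<forall>i \<le> m. \<exists>gs bs. rexec Q I \<Delta> gs bs \<and>
            labels (last gs) = S i \<and> card (nodes (gs ! 0)) = c i \<and>
            (\<forall>v \<in> nodes (gs ! 0). active_length bs v \<le> i)"
proof (intro allI impI)
  fix i assume "i \<le> m"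
  then show "\<exists>gs bs. rexec Q I \<Delta> gs bs \<and>
            labels (last gs) = S i \<and> card (nodes (gs ! 0)) = c i \<and>
            (\<forall>v \<in> nodes (gs ! 0). active_length bs v \<le> i)"
  proof (induction i)
    case 0
    have IQ: "I \<subseteq> Q" and fI: "finite I" using assms(1) unfolding broadcast_protocol_def
      by (auto intro: finite_subset)
    obtain h where h: "bij_betw h {0..<card I} I" using ex_bij_betw_nat_finite[OF fI] by blast
    have img: "h ` {0..<card I} = I" using h by (simp add: bij_betw_def)
    have ic: "initial_config Q I ({0..<card I}, {}, h)"
      using img IQ unfolding initial_config_def is_config_def labels_def by (auto simp: sym_def irrefl_def)
    have "rexec Q I \<Delta> [({0..<card I}, {}, h)] []" using ic by (simp add: rexec_def)
    then show ?case using assms(2) img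
      by (intro exI[of _ "[({0..<card I}, {}, h)]"] exI[of _ "[]"])
         (auto simp: sat_run_def labels_def nodes_def active_length_def)
  next
    case (Suc i)
    then obtain gs bs where r: "rexec Q I \<Delta> gs bs" and lab: "labels (last gs) = S i"
      and cd: "card (nodes (gs ! 0)) = c i" and act: "\<forall>v \<in> nodes (gs ! 0). active_length bs v \<le> i"
      by auto
    have "sat_step \<Delta> (S i) (c i) (S (Suc i)) (c (Suc i))" using assms(2) Suc.prems
      unfolding sat_run_def by auto
    then consider (a) q where "rule1 \<Delta> (S i) q" "S (Suc i) = insert q (S i)" "c (Suc i) = c i + 1"
      | (b) q where "rule2 \<Delta> (S i) q" "S (Suc i) = insert q (S i)" "c (Suc i) = c i + 2"
      unfolding sat_step_def by blast
    then show ?case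
    proof cases
      case a
      then show ?thesis using step1[OF assms(1) r lab act a(1)] cd by auto
    next
      case b
      then show ?thesis using step2[OF assms(1) r lab act b(1)] cd by auto
    qed
  qed
qed

end
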